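(* Let $S=\{\rho_1=0<\rho_2<\cdots\}$ be a numerical semigroup and $\rho\in S$. Then $\#A[\rho]$ is odd if and only if $\rho\in 2S$. In this case, if $\rho=2\rho_i$, then $\#A[\rho]\le 2i-1$.
   Context: A numerical semigroup is a submonoid $S$ of $(\mathbb{N}_0,+)$ with finite complement, with elements listed increasingly. For $\rho\in S$, $A[\rho]=\{p\in S:\ \rho-p\in S\}$. $2S=\{2s:\ s\in S\}$. *)

theory Defs
  imports Main "HOL-Library.Infinite_Set"
begin

definition numerical_semigroup :: "nat set \<Rightarrow> bool" where
  "numerical_semigroup S \<longleftrightarrow> 0 \<in> S \<and> (\<forall>a\<in>S. \<forall>b\<in>S. a + b \<in> S) \<and> finite (UNIV - S)"

text \<open>The i-th element (1-indexed) of S listed increasingly: rho_1 = 0 < rho_2 < ...\<close>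
definition sg_elem :: "nat set \<Rightarrow> nat \<Rightarrow> nat" where
  "sg_elem S i = enumerate S (i - 1)"

definition Aset :: "nat set \<Rightarrow> nat \<Rightarrow> nat set" where
  "Aset S \<rho> = {p \<in> S. p \<le> \<rho> \<and> \<rho> - p \<in> S}"

definition double_set :: "nat set \<Rightarrow> nat set" where
  "double_set S = {2 * s | s. s \<in> S}"

end

theory Submission
  imports Defs
begin

lemma card_below_enum:
  fixes S :: "nat set"
  assumes "infinite S"
  shows "card {s\<in>S. s < enumerate S n} \<le> n"
proof -
  have "{s\<in>S. s < enumerate S n} \<subseteq> enumerate S ` {..<n}"
  proof
    fix s assume "s \<in> {s\<in>S. s < enumerate S n}"
    then have s: "s \<in> S" "s < enumerate S n" by auto
    obtain k where k: "enumerate S k = s" using enumerate_Ex[OF assms s(1)] by blast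
    then have "k < n" using s(2) enumerate_mono_iff[OF assms, of k n] by simp
    then show "s \<in> enumerate S ` {..<n}" using k by blast
  qed
  then have "card {s\<in>S. s < enumerate S n} \<le> card (enumerate S ` {..<n})"
    by (intro card_mono) auto
  also have "\<dots> \<le> n" using card_image_le[of "{..<n}" "enumerate S"] by simp
  finally show ?thesis .
qed

theorem mainTheorem11:
  fixes S :: "nat set" and \<rho> :: nat
  assumes "numerical_semigroup S" and "\<rho> \<in> S"
  shows "(odd (card (Aset S \<rho>)) \<longleftrightarrow> \<rho> \<in> double_set S)
       \<and> (\<forall>i\<ge>1. \<rho> = 2 * sg_elem S i \<longrightarrow> card (Aset S \<rho>) \<le> 2 * i - 1)"
proof -
  define A where "A = Aset S \<rho>"
  define L where "L = {p\<in>A. 2*p < \<rho>}"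
  define H where "H = {p\<in>A. 2*p > \<rho>}"
  define M where "M = {p\<in>A. 2*p = \<rho>}"
  have finA: "finite A" unfolding A_def Aset_def
    by (rule finite_subset[of _ "{..\<rho>}"]) auto
  have Adec: "A = L \<union> H \<union> M" unfolding L_def H_def M_def by auto
  have "card A = card L + card H + card M"
    unfolding Adec using finA
    by (subst card_Un_disjoint; (auto simp: L_def H_def M_def)[])+
  moreover have "card H = card L"
  proof -
    have "bij_betw (\<lambda>p. \<rho> - p) L H"
      unfolding bij_betw_def inj_on_def L_def H_def A_def Aset_def
      by (auto simp: image_def intro!: exI[where x="\<rho> - _"])
    then show ?thesis by (simp add: bij_betw_same_card)
  qed
  ultimately have cardA: "card A = 2 * card L + card M" by simp
  have Mcase: "M = (if \<rho> \<in> double_set S then {\<rho> div 2} else {})"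
    unfolding M_def A_def Aset_def double_set_def by auto
  have part1: "odd (card A) \<longleftrightarrow> \<rho> \<in> double_set S"
    using cardA Mcase by auto
  have infS: "infinite S"
  proof
    assume "finite S"
    then have "finite (S \<union> (UNIV - S))" using assms(1)
      unfolding numerical_semigroup_def by blast
    then show False by simp
  qed
  have part2: "card A \<le> 2 * i - 1" if i: "i \<ge> 1" "\<rho> = 2 * sg_elem S i" for i
  proof -
    let ?r = "enumerate S (i - 1)"
    have rS: "?r \<in> S" using enumerate_in_set[OF infS] .
    have "\<rho> \<in> double_set S" using i rS unfolding sg_elem_def double_set_def by auto
    then have cM: "card M = 1" using Mcase by simp
    have "L \<subseteq> {s\<in>S. s < ?r}" using i unfolding L_def A_def Aset_def sg_elem_def by auto
    then have "card L \<le> card {s\<in>S. s < ?r}"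
      by (intro card_mono) (auto intro: finite_subset[of _ "{..<?r}"])
    also have "\<dots> \<le> i - 1" by (rule card_below_enum[OF infS])
    finally show ?thesis using cardA cM i(1) by linarith
  qed
  show ?thesis using part1 part2 unfolding A_def by blast
qed

end
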